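(* Let $\mathcal H$ be a real Hilbert space, let $f:\mathcal H\to\mathbb R$ be convex and continuously differentiable with $\operatorname{argmin}_{\mathcal H} f\neq\emptyset$, let $t_0>0$ and $\alpha\ge 0$. Let $u:[t_0,+\infty[\to\mathcal H$ be a (classical, $\mathcal C^3$) solution of $$\text{(TOGES-V)}\qquad \dddot u(t)+\frac{\alpha+7}{t}\ddot u(t)+\frac{5(\alpha+1)}{t^2}\dot u(t)+\nabla f\Big(u(t)+\tfrac14 t\dot u(t)\Big)=0,\quad t\ge t_0.$$ (a) If $\alpha\ge 3$, then as $t\to+\infty$: (i) $f\big(u(t)+\tfrac14 t\dot u(t)\big)-\inf_{\mathcal H} f=\mathcal O(1/t^3)$; (ii) $f(u(t))-\inf_{\mathcal H} f=\mathcal O(1/t^3)$. (b) If $\alpha>3$, then as $t\to+\infty$: (iii) $f\big(u(t)+\tfrac14 t\dot u(t)\big)-\inf_{\mathcal H} f=o(1/t^3)$; (iv) $f(u(t))-\inf_{\mathcal H} f=o(1/t^3)$; (v) $u(t)$ converges weakly in $\mathcal H$ to some $u_\infty\in\operatorname{argmin}_{\mathcal H} f$.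
   Context: $\dot u,\ddot u,\dddot u$ denote the first, second and third time derivatives of $u$; $\nabla f$ is the gradient of $f$. *)

theory Defs
  imports "HOL-Analysis.Analysis" "HOL-Library.Landau_Symbols"
begin

definition argmin_set :: "('a \<Rightarrow> real) \<Rightarrow> 'a set" where
  "argmin_set f = {x. \<forall>y. f x \<le> f y}"

definition weakly_tendsto_at_top :: "(real \<Rightarrow> 'a::real_inner) \<Rightarrow> 'a \<Rightarrow> bool" where
  "weakly_tendsto_at_top u l \<longleftrightarrow> (\<forall>y. ((\<lambda>t. inner (u t) y) \<longlongrightarrow> inner l y) at_top)"

end

theory Submission
  imports Defs "HOL-Library.Diagonal_Subsequence"
begin

lemma proj_subspace:
  fixes y :: "'a::{real_inner,complete_space}"
  assumes cl: "closed C" and sub: "subspace C"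
  shows "\<exists>p\<in>C. \<forall>c\<in>C. inner (y - p) c = 0"
proof -
  define D where "D = (\<lambda>c. norm (y - c)) ` C"
  define d where "d = Inf D"
  have z: "0 \<in> C" using sub by (simp add: subspace_0)
  have Dne: "D \<noteq> {}" using z by (auto simp: D_def)
  have Dbdd: "bdd_below D" unfolding D_def by (rule bdd_belowI[of _ 0]) auto
  have dle: "d \<le> norm (y - c)" if "c \<in> C" for c
    unfolding d_def D_def using that Dbdd by (auto intro!: cInf_lower simp: D_def)
  have d0: "d \<ge> 0" unfolding d_def using Dne by (intro cInf_greatest) (auto simp: D_def)
  have "\<exists>c\<in>C. norm (y - c) < d + 1 / (real k + 1)" for k
  proof -
    have "Inf D < d + 1/(real k + 1)" unfolding d_def by (simp add: add_pos_pos)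
    then obtain x where "x \<in> D" "x < d + 1/(real k + 1)" using cInf_lessD[OF Dne] by blast
    then show ?thesis by (auto simp: D_def)
  qed
  then obtain c where cC: "\<And>k. c k \<in> C" and cl1: "\<And>k. norm (y - c k) < d + 1 / (real k + 1)"
    by metis
  have sq: "(norm (y - c k))^2 \<le> d^2 + (2*d+1) / (real k + 1)" for k
  proof -
    define e where "e = 1/(real k + 1)"
    have e0: "0 < e" "e \<le> 1" by (auto simp: e_def field_simps)
    have a: "norm (y - c k) \<le> d + e" using cl1[of k] by (simp add: e_def)
    have "(norm (y - c k))^2 \<le> (d + e)^2"
      using a by (intro power_mono) auto
    also have "\<dots> \<le> d^2 + (2*d+1) * e" using e0 d0
      by (simp add: power2_eq_square algebra_simps)
    finally show ?thesis by (simp add: e_def)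
  qed
  have par: "(norm (c j - c k))^2 \<le> 2*(2*d+1)*(1/(real j+1) + 1/(real k+1))" for j k
  proof -
    have mid: "(1/2) *\<^sub>R (c j + c k) \<in> C"
      using sub cC by (intro subspace_mul subspace_add) auto
    have "d \<le> norm (y - (1/2) *\<^sub>R (c j + c k))" by (rule dle[OF mid])
    hence md: "d^2 \<le> (norm (y - (1/2) *\<^sub>R (c j + c k)))^2" using d0 by (intro power_mono) auto
    have pl: "(norm (c j - c k))^2 = 2*(norm (y - c j))^2 + 2*(norm (y - c k))^2 - 4*(norm (y - (1/2) *\<^sub>R (c j + c k)))^2"
      unfolding power2_norm_eq_inner
      by (simp add: inner_diff_left inner_diff_right inner_add_left inner_add_right inner_commute algebra_simps)
    have eq: "2*(2*d+1)*(1/(real j+1) + 1/(real k+1)) = 2*((2*d+1)/(real j+1)) + 2*((2*d+1)/(real k+1))"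
      by (simp add: field_simps)
    show ?thesis using pl md sq[of j] sq[of k] unfolding eq by linarith
  qed
  have Cau: "Cauchy c"
  proof (rule CauchyI)
    fix e :: real assume e: "e > 0"
    obtain N :: nat where N: "real N > 4*(2*d+1)/e^2" using reals_Archimedean2 by blast
    show "\<exists>M. \<forall>m\<ge>M. \<forall>n\<ge>M. norm (c m - c n) < e"
    proof (intro exI[of _ N] allI impI)
      fix m n assume mn: "m \<ge> N" "n \<ge> N"
      have Np: "real N + 1 > 0" by simp
      have "1/(real m+1) \<le> 1/(real N+1)" "1/(real n+1) \<le> 1/(real N+1)"
        using mn by (auto intro!: divide_left_mono)
      hence s: "1/(real m+1) + 1/(real n+1) \<le> 2/(real N+1)" by simp
      have "(norm (c m - c n))^2 \<le> 2*(2*d+1)*(2/(real N+1))"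
        using mult_left_mono[OF s, of "2*(2*d+1)"] d0 par[of m n] by fastforce
      also have "\<dots> = 4*(2*d+1)/(real N+1)" by simp
      also have "\<dots> < e^2"
      proof -
        have e2: "e^2 > 0" using e by simp
        have "4*(2*d+1) < real N * e^2" using N e2 by (simp add: pos_divide_less_eq)
        also have "\<dots> < e^2 * (real N + 1)" using e2 by (simp add: algebra_simps)
        finally show ?thesis by (simp add: pos_divide_less_eq)
      qed
      finally have "(norm (c m - c n))^2 < e^2" .
      thus "norm (c m - c n) < e" by (rule power2_less_imp_less) (use e in auto)
    qed
  qed
  then obtain p where p: "c \<longlonglongrightarrow> p" using Cauchy_convergent_iff convergent_def by blast
  have pC: "p \<in> C" using closed_sequentially[OF cl] cC p by blast
  have "norm (y - p) \<le> d"
  proof (rule tendsto_le[OF trivial_limit_sequentially])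
    show "(\<lambda>k. norm (y - c k)) \<longlonglongrightarrow> norm (y - p)" using tendsto_norm[OF tendsto_diff[OF tendsto_const p]] by simp
    show "(\<lambda>k. d + 1/(real k + 1)) \<longlonglongrightarrow> d"
      proof -
      have "(\<lambda>k. 1 / (real k + 1)) \<longlonglongrightarrow> 0"
        using LIMSEQ_Suc[OF lim_inverse_n'] by (simp add: add.commute)
      from tendsto_add[OF tendsto_const[of d] this] show ?thesis by simp
    qed
    show "\<forall>\<^sub>F k in sequentially. norm (y - c k) \<le> d + 1 / (real k + 1)"
      using cl1 by (intro always_eventually allI) (simp add: less_imp_le)
  qed
  hence pmin: "norm (y - p) \<le> norm (y - c)" if "c \<in> C" for c using dle[OF that] by simp
  show ?thesis
  proof (intro bexI[OF _ pC] ballI)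
    fix c assume cC': "c \<in> C"
    define a where "a = inner (y - p) c"
    show "inner (y - p) c = 0"
    proof (cases "c = 0")
      case True thus ?thesis by simp
    next
      case False
      define s where "s = a / inner c c"
      have cc: "inner c c > 0" using False by simp
      have "p + s *\<^sub>R c \<in> C" using sub pC cC' by (intro subspace_add subspace_mul) auto
      hence "norm (y - p) \<le> norm (y - (p + s *\<^sub>R c))" by (rule pmin)
      hence "(norm (y - p))^2 \<le> (norm (y - (p + s *\<^sub>R c)))^2" by (intro power_mono) auto
      hence "inner (y - p) (y - p) \<le> inner (y - p - s *\<^sub>R c) (y - p - s *\<^sub>R c)"
        by (simp add: power2_norm_eq_inner algebra_simps)
      hence "0 \<le> s * s * inner c c - 2 * s * a"
        by (simp add: inner_diff_left inner_diff_right a_def inner_commute algebra_simps)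
      moreover have "s * s * inner c c - 2 * s * a = -(a*a)/inner c c" using cc
        by (simp add: s_def field_simps power2_eq_square)
      ultimately have "a*a/inner c c \<le> 0" by simp
      hence "a*a \<le> 0" using cc by (simp add: divide_le_0_iff)
      moreover have "a*a \<ge> 0" by simp
      ultimately have "a*a = 0" by linarith
      thus ?thesis unfolding a_def by simp
    qed
  qed
qed


lemma riesz_repr:
  fixes L :: "'a::{real_inner,complete_space} \<Rightarrow> real"
  assumes bl: "bounded_linear L"
  shows "\<exists>q. \<forall>y. L y = inner q y"
proof (cases "\<forall>y. L y = 0")
  case True thus ?thesis by (intro exI[of _ 0]) simp
next
  case False
  then obtain y0 where y0: "L y0 \<noteq> 0" by blast
  interpret L: bounded_linear L by (rule bl)
  define K where "K = {y. L y = 0}"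
  have clK: "closed K" unfolding K_def
    by (rule closed_Collect_eq) (auto intro: linear_continuous_on bl)
  have subK: "subspace K" unfolding K_def subspace_def
    by (auto simp: L.add L.scaleR L.zero)
  obtain p where pK: "p \<in> K" and orth: "\<And>c. c \<in> K \<Longrightarrow> inner (y0 - p) c = 0"
    using proj_subspace[OF clK subK, of y0] by blast
  define e where "e = y0 - p"
  have Le: "L e = L y0" using pK by (simp add: e_def L.diff K_def)
  have e0: "e \<noteq> 0" using Le y0 by auto
  have ee: "inner e e > 0" using e0 by simp
  define q where "q = (L e / inner e e) *\<^sub>R e"
  show ?thesis
  proof (intro exI[of _ q] allI)
    fix y
    define k where "k = y - (L y / L e) *\<^sub>R e"
    have "L k = 0" using Le y0 by (simp add: k_def L.diff L.scaleR)
    hence "inner e k = 0" using orth[of k] by (simp add: K_def e_def)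
    hence "inner e y = (L y / L e) * inner e e" by (simp add: k_def inner_diff_right)
    thus "L y = inner q y" using ee Le y0 by (simp add: q_def)
  qed
qed

lemma weak_compact:
  fixes x :: "nat \<Rightarrow> 'a::{real_inner,complete_space}"
  assumes M: "\<And>n. norm (x n) \<le> M"
  shows "\<exists>r q. strict_mono r \<and> (\<forall>y. (\<lambda>n. inner (x (r n)) y) \<longlonglongrightarrow> inner q y)"
proof -
  have M0: "M \<ge> 0" using M[of 0] norm_ge_zero order_trans by blast
  have bnd: "\<bar>inner (x n) y\<bar> \<le> M * norm y" for n y
  proof -
    have "\<bar>inner (x n) y\<bar> \<le> norm (x n) * norm y" by (rule Cauchy_Schwarz_ineq2)
    also have "\<dots> \<le> M * norm y" using M[of n] by (simp add: mult_right_mono)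
    finally show ?thesis .
  qed
  define P where "P = (\<lambda>m (s::nat\<Rightarrow>nat). convergent (\<lambda>n. inner (x (s n)) (x m)))"
  interpret S: subseqs P
  proof
    fix m and s :: "nat \<Rightarrow> nat" assume "strict_mono s"
    have "bounded (range (\<lambda>n. inner (x (s n)) (x m)))"
      unfolding bounded_iff using bnd by (intro exI[of _ "M * norm (x m)"]) auto
    then obtain l r where r: "strict_mono r" "((\<lambda>n. inner (x (s n)) (x m)) \<circ> r) \<longlonglongrightarrow> l"
      using bounded_imp_convergent_subsequence by blast
    show "\<exists>r'. strict_mono r' \<and> P m (s \<circ> r')"
      using r by (intro exI[of _ r]) (auto simp: P_def convergent_def o_def)
  qed
  define r where "r = S.diagseq"
  have rmono: "strict_mono r" unfolding r_def by (rule S.subseq_diagseq)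
  have conv_x: "convergent (\<lambda>n. inner (x (r n)) (x m))" for m
  proof -
    have "P m (S.diagseq \<circ> ((+) (Suc m)))"
    proof (rule S.diagseq_holds)
      fix r' s n assume "strict_mono (r'::nat\<Rightarrow>nat)" "P n s"
      then obtain l where "(\<lambda>k. inner (x (s k)) (x n)) \<longlonglongrightarrow> l" by (auto simp: P_def convergent_def)
      from LIMSEQ_subseq_LIMSEQ[OF this \<open>strict_mono r'\<close>]
      show "P n (s \<circ> r')" by (auto simp: P_def convergent_def o_def)
    qed
    then obtain l where "(\<lambda>n. inner (x (r (Suc m + n))) (x m)) \<longlonglongrightarrow> l"
      by (auto simp: P_def convergent_def o_def r_def)
    hence "(\<lambda>n. inner (x (r (n + Suc m))) (x m)) \<longlonglongrightarrow> l" by (simp add: add.commute)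
    hence "(\<lambda>n. inner (x (r n)) (x m)) \<longlonglongrightarrow> l" by (rule LIMSEQ_offset)
    thus ?thesis by (auto simp: convergent_def)
  qed
  define C where "C = {y. convergent (\<lambda>n. inner (x (r n)) y)}"
  have C0: "0 \<in> C" by (simp add: C_def convergent_const)
  have Cadd: "a + b \<in> C" if "a \<in> C" "b \<in> C" for a b
    using that by (auto simp: C_def inner_add_right intro: convergent_add)
  have Cmul: "c *\<^sub>R a \<in> C" if aC: "a \<in> C" for a c
  proof -
    obtain l where "(\<lambda>n. inner (x (r n)) a) \<longlonglongrightarrow> l" using aC unfolding C_def convergent_def by blast
    hence "(\<lambda>n. c * inner (x (r n)) a) \<longlonglongrightarrow> c * l" by (rule tendsto_mult_left)
    thus ?thesis by (auto simp: C_def convergent_def)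
  qed
  have subC: "subspace C" unfolding subspace_def using C0 Cadd Cmul by blast
  have clC: "closed C" unfolding closed_sequential_limits
  proof (intro allI impI, elim conjE)
    fix ys l assume ysC: "\<forall>n. ys n \<in> C" and ysl: "ys \<longlonglongrightarrow> l"
    have "Cauchy (\<lambda>n. inner (x (r n)) l)"
    proof (rule metric_CauchyI)
      fix e :: real assume e: "e > 0"
      have e4: "e / (4 * (M + 1)) > 0" using e M0 by simp
      obtain k0 where k0: "\<And>k. k \<ge> k0 \<Longrightarrow> norm (ys k - l) < e / (4 * (M + 1))"
        using LIMSEQ_D[OF ysl e4] by blast
      define k where "k = k0"
      have nk: "norm (ys k - l) < e / (4 * (M + 1))" using k0 by (simp add: k_def)
      have "Cauchy (\<lambda>n. inner (x (r n)) (ys k))"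
        using ysC by (simp add: C_def Cauchy_convergent_iff)
      then obtain N where N: "\<And>m n. m \<ge> N \<Longrightarrow> n \<ge> N \<Longrightarrow> dist (inner (x (r m)) (ys k)) (inner (x (r n)) (ys k)) < e/2"
        using metric_CauchyD[of _ "e/2"] e by (meson half_gt_zero)
      show "\<exists>N. \<forall>m\<ge>N. \<forall>n\<ge>N. dist (inner (x (r m)) l) (inner (x (r n)) l) < e"
      proof (intro exI[of _ N] allI impI)
        fix m n assume mn: "m \<ge> N" "n \<ge> N"
        have b1: "\<bar>inner (x (r m)) (l - ys k)\<bar> \<le> M * norm (l - ys k)" by (rule bnd)
        have b2: "\<bar>inner (x (r n)) (l - ys k)\<bar> \<le> M * norm (l - ys k)" by (rule bnd)
        have nk': "M * norm (l - ys k) \<le> M * (e / (4 * (M + 1)))"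
          using nk M0 by (intro mult_left_mono) (auto simp: norm_minus_commute)
        have "M * (e / (4 * (M + 1))) \<le> e / 4" using M0 e by (simp add: field_simps)
        have eq: "inner (x (r m)) l - inner (x (r n)) l = inner (x (r m)) (l - ys k) - inner (x (r n)) (l - ys k) + (inner (x (r m)) (ys k) - inner (x (r n)) (ys k))"
          by (simp add: inner_diff_right)
        have "dist (inner (x (r m)) (ys k)) (inner (x (r n)) (ys k)) < e/2" using N mn by blast
        hence "\<bar>inner (x (r m)) (ys k) - inner (x (r n)) (ys k)\<bar> < e/2" by (simp add: dist_real_def)
        thus "dist (inner (x (r m)) l) (inner (x (r n)) l) < e"
          unfolding dist_real_def eq using b1 b2 nk' \<open>M * (e / (4 * (M + 1))) \<le> e / 4\<close> by linarith
      qed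
    qed
    thus "l \<in> C" by (simp add: C_def Cauchy_convergent_iff)
  qed
  have xC: "x m \<in> C" for m using conv_x by (simp add: C_def)
  have allC: "y \<in> C" for y
  proof -
    obtain p where pC: "p \<in> C" and orth: "\<And>c. c \<in> C \<Longrightarrow> inner (y - p) c = 0"
      using proj_subspace[OF clC subC, of y] by blast
    have "inner (x (r n)) (y - p) = 0" for n using orth[OF xC, of "r n"] by (simp add: inner_commute)
    hence "y - p \<in> C" by (simp add: C_def convergent_const)
    hence "inner (y - p) (y - p) = 0" by (rule orth)
    hence "y = p" by simp
    thus ?thesis using pC by simp
  qed
  define L where "L y = lim (\<lambda>n. inner (x (r n)) y)" for y
  have Llim: "(\<lambda>n. inner (x (r n)) y) \<longlonglongrightarrow> L y" for y
    using allC[of y] unfolding L_def C_def by (simp add: convergent_LIMSEQ_iff)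
  have bl: "bounded_linear L"
  proof (rule bounded_linear_intro)
    fix a b
    have "(\<lambda>n. inner (x (r n)) (a + b)) \<longlonglongrightarrow> L a + L b"
      using tendsto_add[OF Llim[of a] Llim[of b]] by (simp add: inner_add_right)
    thus "L (a + b) = L a + L b" using Llim[of "a+b"] LIMSEQ_unique by blast
  next
    fix c :: real and a
    have "(\<lambda>n. inner (x (r n)) (c *\<^sub>R a)) \<longlonglongrightarrow> c *\<^sub>R L a"
      using tendsto_mult_left[OF Llim[of a], of c] by simp
    thus "L (c *\<^sub>R a) = c *\<^sub>R L a" using Llim[of "c *\<^sub>R a"] LIMSEQ_unique by blast
  next
    fix a
    have "(\<lambda>n. \<bar>inner (x (r n)) a\<bar>) \<longlonglongrightarrow> \<bar>L a\<bar>" by (rule tendsto_rabs[OF Llim])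
    hence "\<bar>L a\<bar> \<le> M * norm a"
      by (rule LIMSEQ_le_const2) (use bnd in blast)
    thus "norm (L a) \<le> norm a * M" by (simp add: mult.commute)
  qed
  obtain q where q: "\<And>y. L y = inner q y" using riesz_repr[OF bl] by blast
  show ?thesis using rmono Llim q by (intro exI[of _ r] exI[of _ q]) auto
qed

lemma comp_deriv:
  fixes f :: "'a::real_inner \<Rightarrow> real"
  assumes grad: "\<And>x. (f has_derivative (\<lambda>h. inner (gradf x) h)) (at x)"
    and dv: "(v has_vector_derivative v') (at t within s)"
  shows "((\<lambda>s. f (v s)) has_real_derivative inner (gradf (v t)) v') (at t within s)"
proof -
  have "((\<lambda>s. f (v s)) has_derivative (\<lambda>h. inner (gradf (v t)) (h *\<^sub>R v'))) (at t within s)"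
    using has_derivative_compose[OF dv[unfolded has_vector_derivative_def] grad[of "v t"]] .
  thus ?thesis unfolding has_field_derivative_def
    by (rule has_derivative_eq_rhs) (auto simp: fun_eq_iff mult.commute)
qed

lemma inner_deriv:
  fixes a b :: "real \<Rightarrow> 'a::real_inner"
  assumes "(a has_vector_derivative a') (at t within s)" "(b has_vector_derivative b') (at t within s)"
  shows "((\<lambda>s. inner (a s) (b s)) has_real_derivative (inner a' (b t) + inner (a t) b')) (at t within s)"
proof -
  have "((\<lambda>s. inner (a s) (b s)) has_derivative (\<lambda>h. inner (a t) (h *\<^sub>R b') + inner (h *\<^sub>R a') (b t))) (at t within s)"
    using has_derivative_inner[OF assms[unfolded has_vector_derivative_def]] .
  thus ?thesis unfolding has_field_derivative_def
    by (rule has_derivative_eq_rhs) (auto simp: fun_eq_iff algebra_simps)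
qed

lemma grad_ineq:
  fixes f :: "'a::real_inner \<Rightarrow> real"
  assumes convex: "convex_on UNIV f"
    and grad: "\<And>x. (f has_derivative (\<lambda>h. inner (gradf x) h)) (at x)"
  shows "f y \<ge> f x + inner (gradf x) (y - x)"
proof -
  define g where "g s = f (x + s *\<^sub>R (y - x))" for s :: real
  have cg: "convex_on UNIV g"
  proof (rule convex_onI)
    fix t s1 s2 :: real assume t: "t > 0" "t < 1"
    have "x + ((1 - t) * s1 + t * s2) *\<^sub>R (y - x) = (1 - t) *\<^sub>R (x + s1 *\<^sub>R (y - x)) + t *\<^sub>R (x + s2 *\<^sub>R (y - x))"
      by (simp add: algebra_simps)
    hence "g ((1 - t) *\<^sub>R s1 + t *\<^sub>R s2) = f ((1 - t) *\<^sub>R (x + s1 *\<^sub>R (y - x)) + t *\<^sub>R (x + s2 *\<^sub>R (y - x)))"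
      by (simp add: g_def)
    also have "\<dots> \<le> (1 - t) * g s1 + t * g s2"
      unfolding g_def using t by (intro convex_onD[OF convex]) auto
    finally show "g ((1 - t) *\<^sub>R s1 + t *\<^sub>R s2) \<le> (1 - t) * g s1 + t * g s2" .
  qed simp
  have dl: "((\<lambda>s. x + s *\<^sub>R (y - x)) has_vector_derivative (y - x)) (at 0)"
    by (auto intro!: derivative_eq_intros)
  have dg: "(g has_real_derivative inner (gradf x) (y - x)) (at 0 within UNIV)"
    using comp_deriv[OF grad dl] by (simp add: g_def[abs_def])
  have "g 1 - g 0 \<ge> inner (gradf x) (y - x) * (1 - 0)"
    by (rule convex_on_imp_above_tangent[OF cg]) (use dg in auto)
  thus ?thesis by (simp add: g_def)
qed

lemma weighted_limit:
  fixes q q' :: "real \<Rightarrow> real"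
  assumes a: "a > 0" and t1: "t1 > 0"
    and dq: "\<And>t. t \<ge> t1 \<Longrightarrow> (q has_real_derivative q' t) (at t)"
    and lim: "((\<lambda>t. t * q' t + a * q t) \<longlongrightarrow> Lc) at_top"
  shows "(q \<longlongrightarrow> Lc / a) at_top"
proof (rule tendstoI)
  fix e :: real assume e: "e > 0"
  define M where "M = Lc / a"
  define \<eta> where "\<eta> = e * a / 2"
  have eta: "\<eta> > 0" using e a by (simp add: \<eta>_def)
  have "eventually (\<lambda>t. dist (t * q' t + a * q t) Lc < \<eta>) at_top" by (rule tendstoD[OF lim eta])
  then obtain T0 where T0: "\<And>t. t \<ge> T0 \<Longrightarrow> \<bar>t * q' t + a * q t - Lc\<bar> < \<eta>"
    by (auto simp: eventually_at_top_linorder dist_real_def)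
  define T where "T = max T0 t1"
  have T: "T \<ge> T0" "T \<ge> t1" "T > 0" using t1 by (auto simp: T_def)
  define k where "k s = s powr a * (q s - M)" for s
  have dk: "(k has_real_derivative t powr (a - 1) * (t * q' t + a * q t - Lc)) (at t)" if "t \<ge> T" for t
  proof -
    have tp: "t > 0" using that T by simp
    have d: "(k has_real_derivative (a * t powr (a - 1)) * (q t - M) + t powr a * q' t) (at t)"
      unfolding k_def[abs_def]
      using DERIV_mult'[OF has_real_derivative_powr[OF tp, of a] DERIV_diff[OF dq[of t] DERIV_const[of M]]] that T
      by (auto simp: algebra_simps)
    have "t powr a = t powr (a - 1) * t" using tp by (simp add: powr_diff)
    hence "(a * t powr (a - 1)) * (q t - M) + t powr a * q' t = t powr (a - 1) * (t * q' t + a * q t - Lc)"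
      using a by (simp add: M_def field_simps)
    thus ?thesis using d by simp
  qed
  have dp: "((\<lambda>s. s powr a) has_real_derivative a * t powr (a - 1)) (at t)" if "t \<ge> T" for t
    using that T by (intro has_real_derivative_powr) auto
  have up: "k t - k T \<le> (\<eta> / a) * (t powr a - T powr a)" if "t \<ge> T" for t
  proof -
    have "(\<lambda>s. k s - (\<eta> / a) * s powr a) t \<le> (\<lambda>s. k s - (\<eta> / a) * s powr a) T"
    proof (rule deriv_nonpos_imp_antimono[where g="\<lambda>s. k s - (\<eta> / a) * s powr a" and g'="\<lambda>s. (s powr (a - 1) * (s * q' s + a * q s - Lc) - (\<eta> / a) * (a * s powr (a - 1)))"])
      fix s assume s: "s \<in> {T..t}"
      show "((\<lambda>s. k s - (\<eta> / a) * s powr a) has_real_derivative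
              (s powr (a - 1) * (s * q' s + a * q s - Lc) - (\<eta> / a) * (a * s powr (a - 1)))) (at s)"
        using s by (intro DERIV_diff DERIV_cmult dk dp) auto
      have "s powr (a - 1) * (s * q' s + a * q s - Lc) \<le> s powr (a - 1) * \<eta>"
        using T0[of s] s T by (intro mult_left_mono) auto
      thus "(s powr (a - 1) * (s * q' s + a * q s - Lc) - (\<eta> / a) * (a * s powr (a - 1))) \<le> 0"
        using a by (simp add: mult.commute)
    qed (use that in auto)
    thus ?thesis by (simp add: algebra_simps)
  qed
  have lo: "k T - k t \<le> (\<eta> / a) * (t powr a - T powr a)" if "t \<ge> T" for t
  proof -
    have "(\<lambda>s. - k s - (\<eta> / a) * s powr a) t \<le> (\<lambda>s. - k s - (\<eta> / a) * s powr a) T"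
    proof (rule deriv_nonpos_imp_antimono[where g="\<lambda>s. - k s - (\<eta> / a) * s powr a" and g'="\<lambda>s. (- (s powr (a - 1) * (s * q' s + a * q s - Lc)) - (\<eta> / a) * (a * s powr (a - 1)))"])
      fix s assume s: "s \<in> {T..t}"
      show "((\<lambda>s. - k s - (\<eta> / a) * s powr a) has_real_derivative
              (- (s powr (a - 1) * (s * q' s + a * q s - Lc)) - (\<eta> / a) * (a * s powr (a - 1)))) (at s)"
        using s by (intro DERIV_diff DERIV_cmult DERIV_minus dk dp) auto
      have "- (s powr (a - 1) * (s * q' s + a * q s - Lc)) \<le> s powr (a - 1) * \<eta>"
      proof -
        have "- (s * q' s + a * q s - Lc) \<le> \<eta>" using T0[of s] s T by auto
        hence "s powr (a - 1) * (- (s * q' s + a * q s - Lc)) \<le> s powr (a - 1) * \<eta>"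
          by (intro mult_left_mono) auto
        thus ?thesis by (simp only: mult_minus_right)
      qed
      thus "(- (s powr (a - 1) * (s * q' s + a * q s - Lc)) - (\<eta> / a) * (a * s powr (a - 1))) \<le> 0"
        using a by (simp add: mult.commute)
    qed (use that in auto)
    thus ?thesis by (simp add: algebra_simps)
  qed
  have bnd: "\<bar>q t - M\<bar> \<le> \<bar>k T\<bar> * t powr (- a) + e / 2" if "t \<ge> T" for t
  proof -
    have tp: "t > 0" using that T by simp
    have Tp: "T powr a \<ge> 0" by simp
    have "\<bar>k t\<bar> \<le> \<bar>k T\<bar> + (\<eta> / a) * t powr a"
      using up[OF that] lo[OF that] Tp eta a
      by (smt (verit) divide_pos_pos mult_left_mono)
    hence "\<bar>k t\<bar> * t powr (- a) \<le> (\<bar>k T\<bar> + (\<eta> / a) * t powr a) * t powr (- a)"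
      by (intro mult_right_mono) auto
    moreover have "\<bar>k t\<bar> * t powr (- a) = \<bar>q t - M\<bar>"
    proof -
      have "\<bar>k t\<bar> = t powr a * \<bar>q t - M\<bar>" by (simp add: k_def abs_mult)
      thus ?thesis using tp by (simp add: powr_minus field_simps)
    qed
    moreover have "(\<bar>k T\<bar> + (\<eta> / a) * t powr a) * t powr (- a) = \<bar>k T\<bar> * t powr (- a) + e / 2"
      using tp a by (simp add: \<eta>_def powr_minus field_simps)
    ultimately show ?thesis by simp
  qed
  have "((\<lambda>t. \<bar>k T\<bar> * t powr (- a)) \<longlongrightarrow> \<bar>k T\<bar> * 0) at_top"
    by (intro tendsto_mult tendsto_const tendsto_neg_powr filterlim_ident) (use a in auto)
  hence "eventually (\<lambda>t. \<bar>k T\<bar> * t powr (- a) < e / 2) at_top"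
    using e by (intro order_tendstoD(2)) auto
  moreover have "eventually (\<lambda>t. t \<ge> T) at_top" by (rule eventually_ge_at_top)
  ultimately show "eventually (\<lambda>t. dist (q t) (Lc / a) < e) at_top"
  proof eventually_elim
    case (elim t)
    thus ?case using bnd[of t] by (simp add: dist_real_def M_def)
  qed
qed

lemma avg_bound:
  fixes \<phi> \<phi>' W :: "real \<Rightarrow> real"
  assumes dphi: "\<And>t. t \<ge> T \<Longrightarrow> (\<phi> has_real_derivative \<phi>' t) (at t)"
    and ineq: "\<And>t. t \<ge> T \<Longrightarrow> \<phi> t + (t / 4) * \<phi>' t \<le> W t"
    and T: "T > 0" and Wb: "\<And>t. t \<ge> T \<Longrightarrow> W t \<le> c / t^3"
    and t: "t \<ge> T"
  shows "t^4 * \<phi> t \<le> T^4 * \<phi> T + 4 * c * (t - T)"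
proof -
  have "(\<lambda>s. s^4 * \<phi> s - 4 * c * s) t \<le> (\<lambda>s. s^4 * \<phi> s - 4 * c * s) T"
  proof (rule deriv_nonpos_imp_antimono[where g="\<lambda>s. s^4 * \<phi> s - 4 * c * s" and g'="\<lambda>s. 4 * s^3 * \<phi> s + s^4 * \<phi>' s - 4 * c"])
    fix s assume s: "s \<in> {T..t}"
    show "((\<lambda>s. s^4 * \<phi> s - 4 * c * s) has_real_derivative
            (4 * s^3 * \<phi> s + s^4 * \<phi>' s - 4 * c)) (at s)"
    proof -
      have "((\<lambda>s. s^4 * \<phi> s) has_real_derivative s^4 * \<phi>' s + (real 4 * s ^ (4 - Suc 0)) * \<phi> s) (at s)"
        using s by (intro DERIV_mult' DERIV_pow dphi) auto
      from DERIV_diff[OF this DERIV_cmult[OF DERIV_ident, of "4*c"]]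
      show ?thesis by (rule DERIV_cong) (simp add: algebra_simps)
    qed
    have sp: "s > 0" using s T by simp
    have "4 * s^3 * (\<phi> s + (s / 4) * \<phi>' s) \<le> 4 * s^3 * (c / s^3)"
      using ineq[of s] Wb[of s] s sp by (intro mult_left_mono) auto
    moreover have "4 * s^3 * (c / s^3) = 4 * c" using sp by simp
    moreover have "4 * s^3 * (\<phi> s + (s / 4) * \<phi>' s) = 4 * s^3 * \<phi> s + s^4 * \<phi>' s"
      by (simp add: algebra_simps power_Suc eval_nat_numeral)
    ultimately show "4 * s^3 * \<phi> s + s^4 * \<phi>' s - 4 * c \<le> 0" by simp
  qed (use t in auto)
  thus ?thesis by (simp add: algebra_simps)
qed

lemma antimono_lim:
  fixes g :: "real \<Rightarrow> real"
  assumes mono: "\<And>s t. T \<le> s \<Longrightarrow> s \<le> t \<Longrightarrow> g t \<le> g s"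
    and lb: "\<And>t. T \<le> t \<Longrightarrow> g t \<ge> 0"
  shows "\<exists>L. (g \<longlongrightarrow> L) at_top"
proof -
  define L where "L = Inf (g ` {T..})"
  have ne: "g ` {T..} \<noteq> {}" by auto
  have bb: "bdd_below (g ` {T..})" using lb by (auto intro!: bdd_belowI[of _ 0])
  have Lle: "L \<le> g t" if "t \<ge> T" for t unfolding L_def using that bb by (auto intro!: cInf_lower)
  have "(g \<longlongrightarrow> L) at_top"
  proof (rule tendstoI)
    fix e :: real assume e: "e > 0"
    have "Inf (g ` {T..}) < L + e" using e by (simp add: L_def)
    then obtain y where "y \<in> g ` {T..}" "y < L + e" using cInf_lessD[OF ne] by blast
    then obtain t0 where t0: "t0 \<ge> T" "g t0 < L + e" by auto
    show "eventually (\<lambda>t. dist (g t) L < e) at_top"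
      unfolding eventually_at_top_linorder
    proof (intro exI[of _ t0] allI impI)
      fix t assume "t \<ge> t0"
      hence "g t \<le> g t0" "L \<le> g t" using mono[of t0 t] t0 Lle[of t] by auto
      thus "dist (g t) L < e" using t0 by (simp add: dist_real_def)
    qed
  qed
  thus ?thesis by blast
qed

lemma lim_zero_by_log:
  fixes A G G' :: "real \<Rightarrow> real"
  assumes Al: "(A \<longlongrightarrow> l) at_top"
    and T: "T > 0"
    and G0: "\<And>t. t \<ge> T \<Longrightarrow> G t \<ge> 0"
    and dG: "\<And>t. t \<ge> T \<Longrightarrow> (G has_real_derivative G' t) (at t)"
    and c: "c > 0"
    and G'le: "\<And>t. t \<ge> T \<Longrightarrow> G' t \<le> - c * A t / t"
  shows "l \<le> 0"
proof (rule ccontr)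
  assume "\<not> l \<le> 0"
  hence l: "l > 0" by simp
  have "l / 2 < l" using l by simp
  from order_tendstoD(1)[OF Al this] have "eventually (\<lambda>t. A t > l / 2) at_top" .
  then obtain T0 where T0: "\<And>t. t \<ge> T0 \<Longrightarrow> A t > l / 2" by (auto simp: eventually_at_top_linorder)
  define T1 where "T1 = max T T0"
  have T1: "T1 \<ge> T" "T1 \<ge> T0" "T1 > 0" using T by (auto simp: T1_def)
  define K where "K = c * l / 2"
  have K: "K > 0" using c l by (simp add: K_def)
  have dec: "G t + K * ln t \<le> G T1 + K * ln T1" if "t \<ge> T1" for t
  proof -
    have "(\<lambda>s. G s + K * ln s) t \<le> (\<lambda>s. G s + K * ln s) T1"
    proof (rule deriv_nonpos_imp_antimono[where g="\<lambda>s. G s + K * ln s" and g'="\<lambda>s. G' s + K * (1 / s)"])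
      fix s assume s: "s \<in> {T1..t}"
      have sp: "s > 0" using s T1 by simp
      show "((\<lambda>s. G s + K * ln s) has_real_derivative G' s + K * (1 / s)) (at s)"
        using s T1 sp by (intro DERIV_add DERIV_cmult dG) (auto intro!: derivative_eq_intros)
      have "G' s \<le> - c * A s / s" using G'le[of s] s T1 by simp
      moreover have "c * (l / 2) \<le> c * A s" using T0[of s] s T1 c by (intro mult_left_mono) auto
      hence "c * (l / 2) / s \<le> c * A s / s" using sp by (intro divide_right_mono) auto
      hence "- c * A s / s \<le> - K * (1 / s)" by (simp add: K_def)
      ultimately show "G' s + K * (1 / s) \<le> 0" by simp
    qed (use that in auto)
    thus ?thesis by simp
  qed
  define t where "t = exp ((G T1 + K * ln T1) / K + 1)"
  have tp: "t > 0" by (simp add: t_def)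
  have lt: "ln t = (G T1 + K * ln T1) / K + 1" by (simp add: t_def)
  have "ln T1 \<le> ln t"
  proof -
    have "G T1 \<ge> 0" using G0 T1 by simp
    hence "(G T1 + K * ln T1) / K \<ge> ln T1" using K by (simp add: field_simps)
    thus ?thesis using lt by simp
  qed
  hence tT: "t \<ge> T1" using tp T1 by simp
  have "K * ln t = G T1 + K * ln T1 + K" using K lt by (simp add: field_simps)
  hence "G t < 0" using dec[OF tT] K by simp
  thus False using G0[of t] tT T1 by simp
qed

lemma bigO_cube:
  fixes F :: "real \<Rightarrow> real"
  assumes "eventually (\<lambda>t. 0 \<le> F t \<and> F t \<le> K / t^3) at_top"
  shows "F \<in> O[at_top](\<lambda>t. 1 / t^3)"
proof (rule bigoI[of _ K])
  show "eventually (\<lambda>t. norm (F t) \<le> K * norm (1 / t^3)) at_top"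
    using assms eventually_gt_at_top[of 0]
  proof eventually_elim
    case (elim t) thus ?case by (simp add: abs_of_nonneg)
  qed
qed

lemma smallo_cube:
  fixes F :: "real \<Rightarrow> real"
  assumes "\<And>c. c > 0 \<Longrightarrow> eventually (\<lambda>t. 0 \<le> F t \<and> F t \<le> c / t^3) at_top"
  shows "F \<in> o[at_top](\<lambda>t. 1 / t^3)"
proof (rule landau_o.smallI)
  fix c :: real assume c: "c > 0"
  show "eventually (\<lambda>t. norm (F t) \<le> c * norm (1 / t^3)) at_top"
    using assms[OF c] eventually_gt_at_top[of 0]
  proof eventually_elim
    case (elim t) thus ?case by (simp add: abs_of_nonneg)
  qed
qed

lemma opial_weak:
  fixes v :: "real \<Rightarrow> 'a::{real_inner,complete_space}" and f :: "'a \<Rightarrow> real"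
  assumes convex: "convex_on UNIV f"
    and grad: "\<And>x. (f has_derivative (\<lambda>h. inner (gradf x) h)) (at x)"
    and lim: "\<And>z. z \<in> argmin_set f \<Longrightarrow> \<exists>l. ((\<lambda>t. (norm (v t - z))^2) \<longlongrightarrow> l) at_top"
    and z0: "z0 \<in> argmin_set f"
    and fv: "((\<lambda>t. f (v t)) \<longlongrightarrow> f z0) at_top"
  shows "\<exists>q \<in> argmin_set f. \<forall>y. ((\<lambda>t. inner (v t) y) \<longlongrightarrow> inner q y) at_top"
proof -
  obtain l0 where l0: "((\<lambda>t. (norm (v t - z0))^2) \<longlongrightarrow> l0) at_top" using lim[OF z0] by blast
  have "eventually (\<lambda>t. (norm (v t - z0))^2 < l0 + 1) at_top"
    using order_tendstoD(2)[OF l0] by simp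
  then obtain T where T: "\<And>t. t \<ge> T \<Longrightarrow> (norm (v t - z0))^2 < l0 + 1"
    by (auto simp: eventually_at_top_linorder)
  define B where "B = norm z0 + l0 + 2"
  have vB: "norm (v t) \<le> B" if "t \<ge> T" for t
  proof -
    have h: "0 \<le> (norm (v t - z0) - 1) * (norm (v t - z0) - 1)" by simp
    have h2: "2 * norm (v t - z0) \<le> 1 + norm (v t - z0) * norm (v t - z0)" using h by (simp add: algebra_simps)
    have a: "norm (v t - z0) \<le> 1 + (norm (v t - z0))^2"
      unfolding power2_eq_square using h2 norm_ge_zero[of "v t - z0"] by linarith
    have "norm (v t) \<le> norm z0 + norm (v t - z0)" by (metis add_diff_cancel_left' norm_triangle_sub)
    thus ?thesis using a T[OF that] by (simp add: B_def)
  qed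
  have clus: "\<exists>r q. strict_mono r \<and> q \<in> argmin_set f \<and> (\<forall>y. (\<lambda>n. inner (v (s (r n))) y) \<longlonglongrightarrow> inner q y)"
    if s: "filterlim s at_top sequentially" for s :: "nat \<Rightarrow> real"
  proof -
    have "eventually (\<lambda>n. s n \<ge> T) sequentially" using s by (simp add: filterlim_at_top)
    then obtain N where N: "\<And>n. n \<ge> N \<Longrightarrow> s n \<ge> T" by (auto simp: eventually_sequentially)
    have "\<And>n. norm (v (s (n + N))) \<le> B" using N vB by simp
    then obtain r' q where r': "strict_mono r'" and q: "\<And>y. (\<lambda>n. inner (v (s (r' n + N))) y) \<longlonglongrightarrow> inner q y"
      using weak_compact[of "\<lambda>n. v (s (n + N))" B] by blast
    define r where "r n = r' n + N" for n
    have rm: "strict_mono r" using r' by (simp add: r_def strict_mono_def)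
    have sr: "filterlim (\<lambda>n. s (r n)) at_top sequentially"
      using filterlim_compose[OF s filterlim_subseq[OF rm]] by (simp add: o_def)
    have q': "(\<lambda>n. inner (v (s (r n))) y) \<longlonglongrightarrow> inner q y" for y using q by (simp add: r_def)
    have f1: "(\<lambda>n. f (v (s (r n)))) \<longlonglongrightarrow> f z0" using filterlim_compose[OF fv sr] by simp
    have f2: "(\<lambda>n. f (v (s (r n))) - (inner (v (s (r n))) (gradf q) - inner q (gradf q))) \<longlonglongrightarrow> f z0"
      using tendsto_diff[OF f1 tendsto_diff[OF q'[of "gradf q"] tendsto_const[of "inner q (gradf q)"]]] by simp
    have "f q \<le> f z0"
    proof (rule LIMSEQ_le_const[OF f2])
      show "\<exists>N. \<forall>n\<ge>N. f q \<le> f (v (s (r n))) - (inner (v (s (r n))) (gradf q) - inner q (gradf q))"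
      proof (intro exI[of _ 0] allI impI)
        fix n
        have "f (v (s (r n))) \<ge> f q + inner (gradf q) (v (s (r n)) - q)" by (rule grad_ineq[OF convex grad])
        thus "f q \<le> f (v (s (r n))) - (inner (v (s (r n))) (gradf q) - inner q (gradf q))"
          by (simp add: inner_diff_right inner_commute)
      qed
    qed
    hence "q \<in> argmin_set f" using z0 by (auto simp: argmin_set_def intro: order_trans)
    thus ?thesis using rm q' by blast
  qed
  have diffeq: "(norm (v t - a))^2 - (norm (v t - b))^2 = 2 * inner (v t) (b - a) + inner a a - inner b b" for t a b
    by (simp add: power2_norm_eq_inner inner_diff_left inner_diff_right inner_commute algebra_simps)
  have uniq: "q1 = q2" if q1: "q1 \<in> argmin_set f" and q2: "q2 \<in> argmin_set f"
    and s1: "filterlim s1 at_top sequentially" and s2: "filterlim s2 at_top sequentially"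
    and w1: "(\<lambda>n. inner (v (s1 n)) (q2 - q1)) \<longlonglongrightarrow> inner q1 (q2 - q1)"
    and w2: "(\<lambda>n. inner (v (s2 n)) (q2 - q1)) \<longlonglongrightarrow> inner q2 (q2 - q1)"
    for q1 q2 and s1 s2 :: "nat \<Rightarrow> real"
  proof -
    obtain l1 where l1: "((\<lambda>t. (norm (v t - q1))^2) \<longlongrightarrow> l1) at_top" using lim[OF q1] by blast
    obtain l2 where l2: "((\<lambda>t. (norm (v t - q2))^2) \<longlongrightarrow> l2) at_top" using lim[OF q2] by blast
    have D: "((\<lambda>t. 2 * inner (v t) (q2 - q1) + inner q1 q1 - inner q2 q2) \<longlongrightarrow> l1 - l2) at_top"
      using tendsto_diff[OF l1 l2] unfolding diffeq .
    have a1: "(\<lambda>n. 2 * inner (v (s1 n)) (q2 - q1) + inner q1 q1 - inner q2 q2) \<longlonglongrightarrow> l1 - l2"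
      using filterlim_compose[OF D s1] by simp
    have b1: "(\<lambda>n. 2 * inner (v (s1 n)) (q2 - q1) + inner q1 q1 - inner q2 q2) \<longlonglongrightarrow> 2 * inner q1 (q2 - q1) + inner q1 q1 - inner q2 q2"
      by (intro tendsto_intros w1)
    have a2: "(\<lambda>n. 2 * inner (v (s2 n)) (q2 - q1) + inner q1 q1 - inner q2 q2) \<longlonglongrightarrow> l1 - l2"
      using filterlim_compose[OF D s2] by simp
    have b2: "(\<lambda>n. 2 * inner (v (s2 n)) (q2 - q1) + inner q1 q1 - inner q2 q2) \<longlonglongrightarrow> 2 * inner q2 (q2 - q1) + inner q1 q1 - inner q2 q2"
      by (intro tendsto_intros w2)
    have "2 * inner q1 (q2 - q1) = 2 * inner q2 (q2 - q1)"
      using LIMSEQ_unique[OF a1 b1] LIMSEQ_unique[OF a2 b2] by simp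
    hence "inner (q2 - q1) (q2 - q1) = 0" by (simp add: inner_diff_left)
    thus ?thesis by simp
  qed
  obtain r0 q where r0: "strict_mono r0" and qS: "q \<in> argmin_set f"
    and wq: "\<And>y. (\<lambda>n. inner (v (real (r0 n))) y) \<longlonglongrightarrow> inner q y"
    using clus[OF filterlim_real_sequentially] by blast
  have sr0: "filterlim (\<lambda>n. real (r0 n)) at_top sequentially"
    using filterlim_compose[OF filterlim_real_sequentially filterlim_subseq[OF r0]] by (simp add: o_def)
  show ?thesis
  proof (intro bexI[OF _ qS] allI)
    fix y
    show "((\<lambda>t. inner (v t) y) \<longlongrightarrow> inner q y) at_top"
    proof (rule ccontr)
      assume nc: "\<not> ?thesis"
      obtain e where e: "e > 0" and ev: "\<not> eventually (\<lambda>t. dist (inner (v t) y) (inner q y) < e) at_top"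
        using nc unfolding tendsto_iff by blast
      have "\<forall>n. \<exists>t. t \<ge> real n \<and> dist (inner (v t) y) (inner q y) \<ge> e"
        using ev unfolding eventually_at_top_linorder by (auto simp: not_less)
      hence "\<exists>s. \<forall>n. s n \<ge> real n \<and> dist (inner (v (s n)) y) (inner q y) \<ge> e" by (rule choice)
      then obtain s where s: "\<And>n. s n \<ge> real n" and sd: "\<And>n. dist (inner (v (s n)) y) (inner q y) \<ge> e"
        by blast
      have sl: "filterlim s at_top sequentially"
        by (rule filterlim_at_top_mono[OF filterlim_real_sequentially]) (use s in auto)
      obtain r q' where rm: "strict_mono r" and q'S: "q' \<in> argmin_set f"
        and wq': "\<And>y. (\<lambda>n. inner (v (s (r n))) y) \<longlonglongrightarrow> inner q' y"
        using clus[OF sl] by blast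
      have slr: "filterlim (\<lambda>n. s (r n)) at_top sequentially"
        using filterlim_compose[OF sl filterlim_subseq[OF rm]] by (simp add: o_def)
      have "q = q'" by (rule uniq[OF qS q'S sr0 slr wq wq'])
      hence "(\<lambda>n. dist (inner (v (s (r n))) y) (inner q y)) \<longlonglongrightarrow> dist (inner q y) (inner q y)"
        using wq'[of y] by (intro tendsto_dist tendsto_const) auto
      hence "(\<lambda>n. dist (inner (v (s (r n))) y) (inner q y)) \<longlonglongrightarrow> 0" by simp
      hence "eventually (\<lambda>n. dist (inner (v (s (r n))) y) (inner q y) < e) sequentially"
        using order_tendstoD(2)[OF _ e] by blast
      then obtain n where "dist (inner (v (s (r n))) y) (inner q y) < e" by (auto simp: eventually_sequentially)
      thus False using sd[of "r n"] by simp
    qed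
  qed
qed

lemma within_to_at:
  fixes g :: "real \<Rightarrow> 'a::real_normed_vector"
  assumes "(g has_vector_derivative g') (at t within {t0..})" "t > t0"
  shows "(g has_vector_derivative g') (at t)"
proof -
  have "(g has_vector_derivative g') (at t within {t0<..})"
    by (rule has_vector_derivative_within_subset[OF assms(1)]) auto
  thus ?thesis using at_within_open[of t "{t0<..}"] assms(2) by simp
qed

lemma inner_sq_comb:
  fixes x y :: "'a::real_inner"
  shows "inner (a *\<^sub>R x + b *\<^sub>R y) (a *\<^sub>R x + b *\<^sub>R y) = a*a * inner x x + 2*a*b * inner x y + b*b * inner y y"
  by (simp add: inner_add_left inner_add_right inner_commute algebra_simps)

theorem theorem2p1:
  fixes f :: "'a::{real_inner, complete_space} \<Rightarrow> real"
    and gradf :: "'a \<Rightarrow> 'a"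
    and u u1 u2 u3 :: "real \<Rightarrow> 'a"
    and t0 \<alpha> :: real
  assumes convex: "convex_on UNIV f"
    and grad: "\<And>x. (f has_derivative (\<lambda>h. inner (gradf x) h)) (at x)"
    and grad_cont: "continuous_on UNIV gradf"
    and argmin_ne: "argmin_set f \<noteq> {}"
    and t0_pos: "t0 > 0"
    and alpha_nonneg: "\<alpha> \<ge> 0"
    and d1: "\<And>t. t \<ge> t0 \<Longrightarrow> (u has_vector_derivative u1 t) (at t within {t0..})"
    and d2: "\<And>t. t \<ge> t0 \<Longrightarrow> (u1 has_vector_derivative u2 t) (at t within {t0..})"
    and d3: "\<And>t. t \<ge> t0 \<Longrightarrow> (u2 has_vector_derivative u3 t) (at t within {t0..})"
    and u3_cont: "continuous_on {t0..} u3"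
    and ode: "\<And>t. t \<ge> t0 \<Longrightarrow>
      u3 t + ((\<alpha> + 7) / t) *\<^sub>R u2 t + (5 * (\<alpha> + 1) / t\<^sup>2) *\<^sub>R u1 t
        + gradf (u t + (t / 4) *\<^sub>R u1 t) = 0"
  shows "(\<alpha> \<ge> 3 \<longrightarrow>
            (\<lambda>t. f (u t + (t / 4) *\<^sub>R u1 t) - Inf (range f)) \<in> O[at_top](\<lambda>t. 1 / t ^ 3) \<and>
            (\<lambda>t. f (u t) - Inf (range f)) \<in> O[at_top](\<lambda>t. 1 / t ^ 3))
       \<and> (\<alpha> > 3 \<longrightarrow>
            (\<lambda>t. f (u t + (t / 4) *\<^sub>R u1 t) - Inf (range f)) \<in> o[at_top](\<lambda>t. 1 / t ^ 3) \<and>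
            (\<lambda>t. f (u t) - Inf (range f)) \<in> o[at_top](\<lambda>t. 1 / t ^ 3) \<and>
            (\<exists>u_inf \<in> argmin_set f. weakly_tendsto_at_top u u_inf))"
proof -
  define m where "m = Inf (range f)"
  obtain z0 where z0: "z0 \<in> argmin_set f" using argmin_ne by blast
  have fz0: "f z0 = m" unfolding m_def
    using z0 by (intro cInf_eq_minimum[symmetric]) (auto simp: argmin_set_def)
  have mle: "m \<le> f x" for x using z0 fz0 by (auto simp: argmin_set_def)
  have fzm: "f z = m" if "z \<in> argmin_set f" for z
    using that z0 fz0 by (auto simp: argmin_set_def intro: order.antisym)
  define v where "v s = u s + (s / 4) *\<^sub>R u1 s" for s
  define v1 where "v1 s = (5/4) *\<^sub>R u1 s + (s / 4) *\<^sub>R u2 s" for s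
  define v2 where "v2 s = (3/2) *\<^sub>R u2 s + (s / 4) *\<^sub>R u3 s" for s
  define a where "a = \<alpha> + 1"
  define t1 where "t1 = t0 + 1"
  have t1: "t1 > t0" "t1 > 0" using t0_pos by (auto simp: t1_def)
  have du: "(u has_vector_derivative u1 t) (at t)" if "t > t0" for t
    using within_to_at[OF d1] that by simp
  have du1: "(u1 has_vector_derivative u2 t) (at t)" if "t > t0" for t
    using within_to_at[OF d2] that by simp
  have du2: "(u2 has_vector_derivative u3 t) (at t)" if "t > t0" for t
    using within_to_at[OF d3] that by simp
  have dv: "(v has_vector_derivative v1 t) (at t)" if "t > t0" for t
  proof -
    have "((\<lambda>s. u s + (s / 4) *\<^sub>R u1 s) has_vector_derivative (u1 t + ((t / 4) *\<^sub>R u2 t + (1/4) *\<^sub>R u1 t))) (at t)"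
      by (intro has_vector_derivative_add has_vector_derivative_scaleR du du1 that)
         (auto intro!: derivative_eq_intros)
    moreover have "u1 t + ((t / 4) *\<^sub>R u2 t + (1/4) *\<^sub>R u1 t) = v1 t"
    proof -
      have e: "(5/4::real) = 1 + 1/4" by simp
      have "(5/4) *\<^sub>R u1 t = u1 t + (1/4) *\<^sub>R u1 t" by (simp only: e scaleR_add_left scaleR_one)
      thus ?thesis by (simp add: v1_def algebra_simps)
    qed
    ultimately show ?thesis by (simp add: v_def[abs_def])
  qed
  have dv1: "(v1 has_vector_derivative v2 t) (at t)" if "t > t0" for t
  proof -
    have e: "(3/2::real) = 5/4 + 1/4" by simp
    have e2: "(3/2) *\<^sub>R u2 t = (5/4) *\<^sub>R u2 t + (1/4) *\<^sub>R u2 t" by (simp only: e scaleR_add_left)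
    have h1: "((\<lambda>s. (5/4) *\<^sub>R u1 s) has_vector_derivative (5/4) *\<^sub>R u2 t) (at t)"
      using has_vector_derivative_scaleR[OF DERIV_const[of "5/4"] du1[OF that]] by simp
    have h2: "((\<lambda>s. (s / 4) *\<^sub>R u2 s) has_vector_derivative ((t / 4) *\<^sub>R u3 t + (1/4) *\<^sub>R u2 t)) (at t)"
      by (intro has_vector_derivative_scaleR du2 that) (auto intro!: derivative_eq_intros)
    have "(v1 has_vector_derivative ((5/4) *\<^sub>R u2 t + ((t / 4) *\<^sub>R u3 t + (1/4) *\<^sub>R u2 t))) (at t)"
      unfolding v1_def[abs_def] by (rule has_vector_derivative_add[OF h1 h2])
    moreover have "(5/4) *\<^sub>R u2 t + ((t / 4) *\<^sub>R u3 t + (1/4) *\<^sub>R u2 t) = v2 t"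
      by (simp add: v2_def e2 algebra_simps)
    ultimately show ?thesis by simp
  qed
  have vode: "t *\<^sub>R v2 t + a *\<^sub>R v1 t + (t^2 / 4) *\<^sub>R gradf (v t) = 0" if "t > t0" for t
  proof -
    have tp: "t > 0" using that t0_pos by simp
    have "(t^2 / 4) *\<^sub>R (u3 t + ((\<alpha> + 7) / t) *\<^sub>R u2 t + (5 * (\<alpha> + 1) / t\<^sup>2) *\<^sub>R u1 t
        + gradf (u t + (t / 4) *\<^sub>R u1 t)) = 0" using ode[of t] that by simp
    moreover have "(t^2 / 4) *\<^sub>R (u3 t + ((\<alpha> + 7) / t) *\<^sub>R u2 t + (5 * (\<alpha> + 1) / t\<^sup>2) *\<^sub>R u1 t
        + gradf (u t + (t / 4) *\<^sub>R u1 t)) = t *\<^sub>R v2 t + a *\<^sub>R v1 t + (t^2 / 4) *\<^sub>R gradf (v t)"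
    proof -
      have c1: "(t^2/4) * ((\<alpha> + 7) / t) = t * (3/2) + a * (t/4)" using tp by (simp add: a_def field_simps power2_eq_square)
      have c2: "(t^2/4) * (5 * (\<alpha> + 1) / t\<^sup>2) = a * (5/4)" using tp by (simp add: a_def field_simps power2_eq_square)
      have c3: "(t^2/4) = t * (t/4)" by (simp add: power2_eq_square)
      show ?thesis
        unfolding v_def v1_def v2_def scaleR_add_right scaleR_scaleR c1 c2
        by (simp add: c3 scaleR_add_left algebra_simps)
    qed
    ultimately show ?thesis by (metis (no_types, lifting))
  qed
  define E where "E lam z t = t^3/4 * (f (v t) - m)
      + 1/2 * inner (lam *\<^sub>R (v t - z) + t *\<^sub>R v1 t) (lam *\<^sub>R (v t - z) + t *\<^sub>R v1 t)
      + (lam * (\<alpha> - lam) / 2) * inner (v t - z) (v t - z)" for lam z t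
  define E' where "E' lam z t = 3 * t^2 / 4 * (f (v t) - m) + t^3/4 * inner (gradf (v t)) (v1 t)
      + inner (lam *\<^sub>R v1 t + (v1 t + t *\<^sub>R v2 t)) (lam *\<^sub>R (v t - z) + t *\<^sub>R v1 t)
      + (lam * (\<alpha> - lam)) * inner (v1 t) (v t - z)" for lam z t
  have dE: "(E lam z has_real_derivative E' lam z t) (at t)" if tt: "t > t0" for lam z t
  proof -
    have dw: "((\<lambda>s. v s - z) has_vector_derivative v1 t) (at t)"
      using has_vector_derivative_diff[OF dv[OF tt] has_vector_derivative_const[of z]] by simp
    have h1: "((\<lambda>s. lam *\<^sub>R (v s - z)) has_vector_derivative lam *\<^sub>R v1 t) (at t)"
      using has_vector_derivative_scaleR[OF DERIV_const[of lam] dw] by simp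
    have h2: "((\<lambda>s. s *\<^sub>R v1 s) has_vector_derivative (v1 t + t *\<^sub>R v2 t)) (at t)"
      using has_vector_derivative_scaleR[OF DERIV_ident dv1[OF tt]] by (simp add: add.commute)
    have dP: "((\<lambda>s. lam *\<^sub>R (v s - z) + s *\<^sub>R v1 s) has_vector_derivative (lam *\<^sub>R v1 t + (v1 t + t *\<^sub>R v2 t))) (at t)"
      by (rule has_vector_derivative_add[OF h1 h2])
    note i1 = inner_deriv[OF dP dP]
    note i2 = inner_deriv[OF dw dw]
    have fdv: "((\<lambda>s. f (v s) - m) has_real_derivative inner (gradf (v t)) (v1 t)) (at t)"
      using DERIV_diff[OF comp_deriv[OF grad dv[OF tt]] DERIV_const[of m]] by simp
    have p3: "((\<lambda>s. s^3/4) has_real_derivative 3 * t^2 / 4) (at t)"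
      by (auto intro!: derivative_eq_intros simp: power2_eq_square)
    have d3: "((\<lambda>s. s^3/4 * (f (v s) - m)) has_real_derivative 3 * t^2 / 4 * (f (v t) - m) + t^3/4 * inner (gradf (v t)) (v1 t)) (at t)"
      using DERIV_mult'[OF p3 fdv] by (simp add: algebra_simps)
    note tot = DERIV_add[OF DERIV_add[OF d3 DERIV_cmult[OF i1, of "1/2"]] DERIV_cmult[OF i2, of "lam * (\<alpha> - lam) / 2"]]
    show ?thesis unfolding E_def[abs_def] E'_def
      by (rule DERIV_cong[OF tot]) (simp add: inner_commute field_simps)
  qed
  have E'le: "E' lam z t \<le> (3 - lam) * t^2 / 4 * (f (v t) - m) + (lam - \<alpha>) * t * inner (v1 t) (v1 t)"
    if tt: "t > t0" and zS: "z \<in> argmin_set f" and lam: "lam \<ge> 0" for lam z t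
  proof -
    have tp: "t > 0" using tt t0_pos by simp
    have tv2: "t *\<^sub>R v2 t = - (a *\<^sub>R v1 t) - (t^2/4) *\<^sub>R gradf (v t)"
      using vode[OF tt] by (simp add: eq_neg_iff_add_eq_0 algebra_simps)
    have P': "lam *\<^sub>R v1 t + (v1 t + t *\<^sub>R v2 t) = (lam - \<alpha>) *\<^sub>R v1 t - (t^2/4) *\<^sub>R gradf (v t)"
      by (simp add: tv2 a_def scaleR_add_left scaleR_diff_left algebra_simps)
    have conv: "inner (gradf (v t)) (v t - z) \<ge> f (v t) - m"
    proof -
      have "f z \<ge> f (v t) + inner (gradf (v t)) (z - v t)" by (rule grad_ineq[OF convex grad])
      hence "f z \<ge> f (v t) - inner (gradf (v t)) (v t - z)" by (simp add: inner_diff_right)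
      thus ?thesis using fzm[OF zS] by simp
    qed
    have eq: "E' lam z t = 3 * t^2 / 4 * (f (v t) - m) + (lam - \<alpha>) * t * inner (v1 t) (v1 t)
        - lam * t^2 / 4 * inner (gradf (v t)) (v t - z)"
      unfolding E'_def P' by (simp add: inner_diff_left inner_diff_right inner_add_left inner_add_right algebra_simps power2_eq_square power3_eq_cube)
    have "lam * t^2 / 4 * (f (v t) - m) \<le> lam * t^2 / 4 * inner (gradf (v t)) (v t - z)"
      using conv lam by (intro mult_left_mono) auto
    moreover have e2: "(3 - lam) * t^2 / 4 * (f (v t) - m) = 3 * t^2 / 4 * (f (v t) - m) - lam * t^2 / 4 * (f (v t) - m)"
      by (simp add: field_simps)
    ultimately show ?thesis unfolding eq e2 by linarith
  qed
  have Wnn: "f (v t) - m \<ge> 0" for t using mle[of "v t"] by simp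
  have Ege: "E lam z t \<ge> t^3/4 * (f (v t) - m)" if "0 \<le> lam" "lam \<le> \<alpha>" for lam z t
  proof -
    have "0 \<le> lam * (\<alpha> - lam) / 2 * inner (v t - z) (v t - z)" using that by simp
    moreover have "0 \<le> 1/2 * inner (lam *\<^sub>R (v t - z) + t *\<^sub>R v1 t) (lam *\<^sub>R (v t - z) + t *\<^sub>R v1 t)" by simp
    ultimately show ?thesis unfolding E_def by linarith
  qed
  have Enn: "E lam z t \<ge> 0" if "0 \<le> lam" "lam \<le> \<alpha>" "t \<ge> 0" for lam z t
    using Ege[where lam=lam and z=z and t=t] that Wnn[of t] by (smt (verit) divide_nonneg_nonneg mult_nonneg_nonneg zero_le_power)
  have E'nonpos: "E' lam z t \<le> 0" if "t > t0" "z \<in> argmin_set f" "3 \<le> lam" "lam \<le> \<alpha>" for lam z t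
  proof -
    have tp: "t > 0" using that t0_pos by simp
    have "(3 - lam) * t^2 / 4 * (f (v t) - m) \<le> 0"
      using that Wnn[of t] by (intro mult_nonpos_nonneg) (auto intro!: divide_nonpos_pos mult_nonpos_nonneg)
    moreover have "(lam - \<alpha>) * t * inner (v1 t) (v1 t) \<le> 0"
      using that tp by (intro mult_nonpos_nonneg) (auto intro!: mult_nonpos_nonneg)
    moreover have "E' lam z t \<le> (3 - lam) * t^2 / 4 * (f (v t) - m) + (lam - \<alpha>) * t * inner (v1 t) (v1 t)"
      by (rule E'le) (use that in auto)
    ultimately show ?thesis by linarith
  qed
  have Eanti: "E lam z t \<le> E lam z s" if "t1 \<le> s" "s \<le> t" "z \<in> argmin_set f" "3 \<le> lam" "lam \<le> \<alpha>" for lam z s t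
  proof (rule deriv_nonpos_imp_antimono[where g="E lam z" and g'="E' lam z"])
    fix x assume "x \<in> {s..t}"
    hence x: "x > t0" using that t1 by auto
    show "(E lam z has_real_derivative E' lam z x) (at x)" by (rule dE[OF x])
    show "E' lam z x \<le> 0" by (rule E'nonpos[OF x that(3-5)])
  qed (use that in auto)
  define \<phi> where "\<phi> t = f (u t) - m" for t
  define \<phi>' where "\<phi>' t = inner (gradf (u t)) (u1 t)" for t
  have dphi: "(\<phi> has_real_derivative \<phi>' t) (at t)" if "t \<ge> t1" for t
    unfolding \<phi>_def[abs_def] \<phi>'_def
    using DERIV_diff[OF comp_deriv[OF grad du] DERIV_const[of m]] that t1 by simp
  have phiineq: "\<phi> t + (t / 4) * \<phi>' t \<le> f (v t) - m" for t
  proof -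
    have "f (v t) \<ge> f (u t) + inner (gradf (u t)) (v t - u t)" by (rule grad_ineq[OF convex grad])
    thus ?thesis by (simp add: \<phi>_def \<phi>'_def v_def)
  qed
  have phinn: "\<phi> t \<ge> 0" for t using mle[of "u t"] by (simp add: \<phi>_def)
  have vv: "(\<lambda>t. f (u t + (t / 4) *\<^sub>R u1 t) - Inf (range f)) = (\<lambda>t. f (v t) - m)"
    by (simp add: v_def m_def)
  have uu: "(\<lambda>t. f (u t) - Inf (range f)) = \<phi>" by (simp add: \<phi>_def[abs_def] m_def)
  have partA: "(\<lambda>t. f (v t) - m) \<in> O[at_top](\<lambda>t. 1 / t ^ 3) \<and> \<phi> \<in> O[at_top](\<lambda>t. 1 / t ^ 3)
      \<and> (\<exists>c. \<forall>t\<ge>t1. f (v t) - m \<le> c / t^3)" if a3: "\<alpha> \<ge> 3"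
  proof -
    define c where "c = 4 * E 3 z0 t1"
    have Wb: "f (v t) - m \<le> c / t^3" if "t \<ge> t1" for t
    proof -
      have tp: "t > 0" using that t1 by simp
      have "t^3/4 * (f (v t) - m) \<le> E 3 z0 t1"
        using Ege[where lam=3 and z=z0 and t=t] Eanti[OF order_refl that z0 order_refl a3] a3 by simp
      thus ?thesis using tp by (simp add: c_def field_simps)
    qed
    have c0: "c \<ge> 0" using Enn[where lam=3 and z=z0 and t=t1] a3 t1 by (simp add: c_def)
    have i: "(\<lambda>t. f (v t) - m) \<in> O[at_top](\<lambda>t. 1 / t ^ 3)"
    proof (rule bigO_cube[of _ c])
      show "eventually (\<lambda>t. 0 \<le> f (v t) - m \<and> f (v t) - m \<le> c / t^3) at_top"
        using eventually_ge_at_top[of t1] by eventually_elim (use Wb Wnn in auto)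
    qed
    define K where "K = \<bar>t1^4 * \<phi> t1\<bar> + 4 * c"
    have "eventually (\<lambda>t. 0 \<le> \<phi> t \<and> \<phi> t \<le> K / t^3) at_top"
      using eventually_ge_at_top[of "max t1 1"]
    proof eventually_elim
      case (elim t)
      hence tt: "t \<ge> t1" "t \<ge> 1" by auto
      have tp: "t > 0" using tt by simp
      have "t^4 * \<phi> t \<le> t1^4 * \<phi> t1 + 4 * c * (t - t1)"
        by (rule avg_bound[OF dphi phiineq t1(2) Wb tt(1)])
      also have "\<dots> \<le> K * t"
      proof -
        have "t1^4 * \<phi> t1 \<le> \<bar>t1^4 * \<phi> t1\<bar> * t" using tt by (smt (verit) abs_ge_self mult_le_cancel_left1 abs_ge_zero)
        moreover have "4 * c * (t - t1) \<le> 4 * c * t" using c0 t1 by (simp add: mult_left_mono)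
        ultimately show ?thesis by (simp add: K_def algebra_simps)
      qed
      finally have "t^4 * \<phi> t \<le> K * t" .
      hence "\<phi> t \<le> K / t^3" using tp by (simp add: field_simps power_Suc eval_nat_numeral)
      thus ?case using phinn[of t] by simp
    qed
    hence ii: "\<phi> \<in> O[at_top](\<lambda>t. 1 / t ^ 3)" by (rule bigO_cube)
    show ?thesis using i ii Wb by blast
  qed
  have partB: "(\<lambda>t. f (v t) - m) \<in> o[at_top](\<lambda>t. 1 / t ^ 3) \<and> \<phi> \<in> o[at_top](\<lambda>t. 1 / t ^ 3)
      \<and> (\<exists>q\<in>argmin_set f. weakly_tendsto_at_top u q)" if a3: "\<alpha> > 3"
  proof -
    define lam2 where "lam2 = (3 + \<alpha>) / 2"
    have l2: "3 \<le> lam2" "lam2 \<le> \<alpha>" "lam2 > 3" using a3 by (auto simp: lam2_def)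
    define A where "A t = t^3/4 * (f (v t) - m) + t^2/2 * inner (v1 t) (v1 t)" for t
    define Bz where "Bz z t = t * inner (v t - z) (v1 t) + \<alpha>/2 * inner (v t - z) (v t - z)" for z t
    have EAB: "E lam z t = A t + lam * Bz z t" for lam z t
      unfolding E_def A_def Bz_def inner_sq_comb
      by (simp add: inner_commute field_simps power2_eq_square)
    have Elim: "\<exists>L. (E lam z \<longlongrightarrow> L) at_top" if zS: "z \<in> argmin_set f" and lam: "3 \<le> lam" "lam \<le> \<alpha>" for lam z
    proof (rule antimono_lim[where T=t1])
      show "E lam z t \<le> E lam z s" if "t1 \<le> s" "s \<le> t" for s t by (rule Eanti[OF that zS lam])
      show "E lam z t \<ge> 0" if "t1 \<le> t" for t using Enn[where lam=lam and z=z and t=t] that lam t1 by simp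
    qed
    have Blim: "\<exists>L. (Bz z \<longlongrightarrow> L) at_top" if zS: "z \<in> argmin_set f" for z
    proof -
      have "\<exists>L. (E 3 z \<longlongrightarrow> L) at_top" by (rule Elim[OF zS]) (use a3 in auto)
      then obtain L1 where L1: "(E 3 z \<longlongrightarrow> L1) at_top" by blast
      obtain L2 where L2: "(E lam2 z \<longlongrightarrow> L2) at_top" using Elim[OF zS l2(1,2)] by blast
      have "((\<lambda>t. (E lam2 z t - E 3 z t) / (lam2 - 3)) \<longlongrightarrow> (L2 - L1) / (lam2 - 3)) at_top"
        by (intro tendsto_divide tendsto_diff L1 L2 tendsto_const) (use l2 in auto)
      moreover have "(\<lambda>t. (E lam2 z t - E 3 z t) / (lam2 - 3)) = Bz z"
        using l2 by (auto simp: fun_eq_iff EAB field_simps)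
      ultimately show ?thesis by auto
    qed
    have Ann: "A t \<ge> 0" if "t \<ge> 0" for t using Wnn[of t] that by (simp add: A_def)
    have Alim: "(A \<longlongrightarrow> 0) at_top"
    proof -
      have "\<exists>L. (E 3 z0 \<longlongrightarrow> L) at_top" by (rule Elim[OF z0]) (use a3 in auto)
      then obtain L1 where L1: "(E 3 z0 \<longlongrightarrow> L1) at_top" by blast
      obtain LB where LB: "(Bz z0 \<longlongrightarrow> LB) at_top" using Blim[OF z0] by blast
      have "((\<lambda>t. E 3 z0 t - 3 * Bz z0 t) \<longlongrightarrow> L1 - 3 * LB) at_top"
        by (intro tendsto_diff tendsto_mult L1 LB tendsto_const)
      moreover have "(\<lambda>t. E 3 z0 t - 3 * Bz z0 t) = A" by (auto simp: fun_eq_iff EAB)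
      ultimately have Al: "(A \<longlongrightarrow> L1 - 3 * LB) at_top" by simp
      define c where "c = (\<alpha> - 3) / 2"
      have c: "c > 0" using a3 by (simp add: c_def)
      have "L1 - 3 * LB \<le> 0"
      proof (rule lim_zero_by_log[OF Al t1(2)])
        show "E lam2 z0 t \<ge> 0" if "t \<ge> t1" for t using Enn[where lam=lam2 and z=z0 and t=t] l2 that t1 by simp
        show "(E lam2 z0 has_real_derivative E' lam2 z0 t) (at t)" if "t \<ge> t1" for t
          using dE[of t lam2 z0] that t1 by simp
        show "c > 0" by (rule c)
        show "E' lam2 z0 t \<le> - c * A t / t" if tt: "t \<ge> t1" for t
        proof -
          have tp: "t > 0" using tt t1 by simp
          have e1: "E' lam2 z0 t \<le> (3 - lam2) * t^2 / 4 * (f (v t) - m) + (lam2 - \<alpha>) * t * inner (v1 t) (v1 t)"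
            by (rule E'le) (use tt t1 z0 l2 in auto)
          have e2: "(3 - lam2) * t^2 / 4 * (f (v t) - m) + (lam2 - \<alpha>) * t * inner (v1 t) (v1 t)
              = - c * (t^2 / 4 * (f (v t) - m)) - c * (t * inner (v1 t) (v1 t))"
            by (simp add: lam2_def c_def field_simps)
          have e3: "- c * A t / t = - c * (t^2 / 4 * (f (v t) - m)) - c * (t / 2 * inner (v1 t) (v1 t))"
            using tp by (simp add: A_def field_simps power2_eq_square power3_eq_cube)
          have "c * (t / 2 * inner (v1 t) (v1 t)) \<le> c * (t * inner (v1 t) (v1 t))"
            using c tp by (intro mult_left_mono) auto
          thus ?thesis using e1 e2 e3 by linarith
        qed
      qed
      moreover have "L1 - 3 * LB \<ge> 0"
      proof -
        have "eventually (\<lambda>t. 0 \<le> A t) at_top" using eventually_ge_at_top[of 0] by eventually_elim (rule Ann)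
        from tendsto_lowerbound[OF Al this] show ?thesis by simp
      qed
      ultimately show ?thesis using Al by simp
    qed
    have Wsmall: "eventually (\<lambda>t. f (v t) - m \<le> c / t^3) at_top" if c: "c > 0" for c
    proof -
      have c4: "c / 4 > 0" using c by simp
      from order_tendstoD(2)[OF Alim c4] have "eventually (\<lambda>t. A t < c / 4) at_top" .
      thus ?thesis using eventually_gt_at_top[of 0]
      proof eventually_elim
        case (elim t)
        have "t^3/4 * (f (v t) - m) \<le> A t" using elim by (simp add: A_def)
        hence "t^3 * (f (v t) - m) \<le> c" using elim by simp
        thus ?case using elim by (simp add: field_simps)
      qed
    qed
    have iii: "(\<lambda>t. f (v t) - m) \<in> o[at_top](\<lambda>t. 1 / t ^ 3)"
    proof (rule smallo_cube)
      fix c :: real assume c: "c > 0"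
      show "eventually (\<lambda>t. 0 \<le> f (v t) - m \<and> f (v t) - m \<le> c / t^3) at_top"
        using Wsmall[OF c] by eventually_elim (use Wnn in auto)
    qed
    have iv: "\<phi> \<in> o[at_top](\<lambda>t. 1 / t ^ 3)"
    proof (rule smallo_cube)
      fix c :: real assume c: "c > 0"
      have c8: "c / 8 > 0" using c by simp
      from Wsmall[OF c8] have "eventually (\<lambda>t. f (v t) - m \<le> (c / 8) / t^3) at_top" .
      then obtain T0 where T0: "\<And>t. t \<ge> T0 \<Longrightarrow> f (v t) - m \<le> (c / 8) / t^3"
        by (auto simp: eventually_at_top_linorder)
      define T where "T = max T0 t1"
      have T: "T \<ge> T0" "T \<ge> t1" "T > 0" using t1 by (auto simp: T_def)
      define K where "K = \<bar>T^4 * \<phi> T\<bar>"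
      show "eventually (\<lambda>t. 0 \<le> \<phi> t \<and> \<phi> t \<le> c / t^3) at_top"
        using eventually_ge_at_top[of "max T (max 1 (2 * K / c))"]
      proof eventually_elim
        case (elim t)
        hence tt: "t \<ge> T" "t \<ge> 1" "t \<ge> 2 * K / c" by auto
        have tp: "t > 0" using tt by simp
        have "t^4 * \<phi> t \<le> T^4 * \<phi> T + 4 * (c / 8) * (t - T)"
          by (rule avg_bound[OF dphi phiineq T(3) T0 tt(1)]) (use T in auto)
        also have "\<dots> \<le> c * t"
        proof -
          have "T^4 * \<phi> T \<le> K" by (simp add: K_def)
          moreover have "K \<le> c / 2 * t" using tt(3) c by (simp add: field_simps)
          moreover have "4 * (c / 8) * (t - T) \<le> c / 2 * t" using c T by (simp add: field_simps)
          ultimately show ?thesis by linarith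
        qed
        finally have "t^4 * \<phi> t \<le> c * t" .
        hence "\<phi> t \<le> c / t^3" using tp by (simp add: field_simps power_Suc eval_nat_numeral)
        thus ?case using phinn[of t] by simp
      qed
    qed
    have v: "\<exists>q\<in>argmin_set f. weakly_tendsto_at_top u q"
    proof -
      have lim: "\<exists>l. ((\<lambda>t. (norm (v t - z))^2) \<longlongrightarrow> l) at_top" if zS: "z \<in> argmin_set f" for z
      proof -
        obtain LB where LB: "(Bz z \<longlongrightarrow> LB) at_top" using Blim[OF zS] by blast
        have "((\<lambda>t. inner (v t - z) (v t - z)) \<longlongrightarrow> (2 * LB) / \<alpha>) at_top"
        proof (rule weighted_limit[where q'="\<lambda>t. 2 * inner (v t - z) (v1 t)" and ?t1.0=t1])
          show "\<alpha> > 0" using a3 by simp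
          show "t1 > 0" by (rule t1(2))
          show "((\<lambda>s. inner (v s - z) (v s - z)) has_real_derivative 2 * inner (v t - z) (v1 t)) (at t)"
            if "t \<ge> t1" for t
          proof -
            have tt: "t > t0" using that t1 by simp
            have dw: "((\<lambda>s. v s - z) has_vector_derivative v1 t) (at t)"
              using has_vector_derivative_diff[OF dv[OF tt] has_vector_derivative_const[of z]] by simp
            show ?thesis using inner_deriv[OF dw dw] by (simp add: inner_commute)
          qed
          have "((\<lambda>t. 2 * Bz z t) \<longlongrightarrow> 2 * LB) at_top" by (intro tendsto_mult tendsto_const LB)
          thus "((\<lambda>t. t * (2 * inner (v t - z) (v1 t)) + \<alpha> * inner (v t - z) (v t - z)) \<longlongrightarrow> 2 * LB) at_top"
            by (simp add: Bz_def algebra_simps)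
        qed
        thus ?thesis by (auto simp: power2_norm_eq_inner)
      qed
      have fv: "((\<lambda>t. f (v t)) \<longlongrightarrow> f z0) at_top"
      proof -
        have "\<exists>c. \<forall>t\<ge>t1. f (v t) - m \<le> c / t^3" using partA[OF less_imp_le[OF a3]] by blast
        then obtain c where cb: "\<And>t. t \<ge> t1 \<Longrightarrow> f (v t) - m \<le> c / t^3" by blast
        have "((\<lambda>t. c / t^3) \<longlongrightarrow> 0) at_top"
          by (intro tendsto_divide_0[OF tendsto_const] filterlim_at_top_imp_at_infinity filterlim_pow_at_top filterlim_ident) auto
        from tendsto_add[OF tendsto_const[of m] this] have up: "((\<lambda>t. m + c / t^3) \<longlongrightarrow> m) at_top" by simp
        have "((\<lambda>t. f (v t)) \<longlongrightarrow> m) at_top"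
        proof (rule tendsto_sandwich[OF _ _ tendsto_const up])
          show "eventually (\<lambda>t. m \<le> f (v t)) at_top" using mle by simp
          show "eventually (\<lambda>t. f (v t) \<le> m + c / t^3) at_top"
            using eventually_ge_at_top[of t1] by eventually_elim (use cb in fastforce)
        qed
        thus ?thesis using fz0 by simp
      qed
      obtain q where qS: "q \<in> argmin_set f" and wq: "\<And>y. ((\<lambda>t. inner (v t) y) \<longlongrightarrow> inner q y) at_top"
        using opial_weak[OF convex grad lim z0 fv] by blast
      have "((\<lambda>t. inner (u t) y) \<longlongrightarrow> inner q y) at_top" for y
      proof -
        have "((\<lambda>t. inner (u t) y) \<longlongrightarrow> (4 * inner q y) / 4) at_top"
        proof (rule weighted_limit[where q'="\<lambda>t. inner (u1 t) y" and ?t1.0=t1])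
          show "(4::real) > 0" by simp
          show "t1 > 0" by (rule t1(2))
          show "((\<lambda>s. inner (u s) y) has_real_derivative inner (u1 t) y) (at t)" if "t \<ge> t1" for t
          proof -
            have tt: "t > t0" using that t1 by simp
            show ?thesis using inner_deriv[OF du[OF tt] has_vector_derivative_const[of y]] by simp
          qed
          have "((\<lambda>t. 4 * inner (v t) y) \<longlongrightarrow> 4 * inner q y) at_top" by (intro tendsto_mult tendsto_const wq)
          thus "((\<lambda>t. t * inner (u1 t) y + 4 * inner (u t) y) \<longlongrightarrow> 4 * inner q y) at_top"
            by (simp add: v_def inner_add_left algebra_simps)
        qed
        thus ?thesis by simp
      qed
      thus ?thesis using qS unfolding weakly_tendsto_at_top_def by blast
    qed
    show ?thesis using iii iv v by blast
  qed
  show ?thesis unfolding vv uu using partA partB by blast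
qed

end
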